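(* Let $p\in(0,1)$, $d\ge2$ an integer, and fix $r_1,r_2\in\mathbb{R}$ with $r_2-r_1>0$. With $x_i=\big[-\kappa^2\frac{2}{d-1}r_it^{2/3}-\kappa s_it^{1/3}\big]$ and $n_i=\big[\frac{p(d-1)}{d(d-p)}t+\kappa^2\frac{2}{d(d-1)}r_it^{2/3}\big]$, there is a constant $C_1$ independent of $t$ such that for any $s_1,s_2\in\mathbb{R}$ the bound $$\kappa t^{1/3}\Big(\frac{d}{d-1}\Big)^{x_2+dn_2-(x_1+dn_1)}\Big(\frac{d^d}{(d-1)^{d-1}}\Big)^{n_1-n_2}\binom{x_1-x_2-1}{n_2-n_1-1}\le C_1e^{-|s_2-s_1|}$$ holds for $t$ large enough.
   Context: $\kappa=\frac{(2(1-p)p)^{1/3}(d(d-1))^{2/3}}{d-p}$; $[\cdot]$ is the integer part; $\binom{a}{b}=\frac{a!}{b!(a-b)!}$ for $0\le b\le a$ and $0$ otherwise. *)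

theory Defs
  imports Complex_Main
begin

definition kappa :: "real \<Rightarrow> real \<Rightarrow> real" where
  "kappa p d = (2 * (1 - p) * p) powr (1/3) * (d * (d - 1)) powr (2/3) / (d - p)"

definition int_binom :: "int \<Rightarrow> int \<Rightarrow> real" where
  "int_binom a b = (if 0 \<le> b \<and> b \<le> a then real (nat a choose nat b) else 0)"

definition x_pt :: "real \<Rightarrow> real \<Rightarrow> real \<Rightarrow> real \<Rightarrow> real \<Rightarrow> int" where
  "x_pt p d r s t = \<lfloor>- ((kappa p d)^2 * (2 / (d - 1)) * r * t powr (2/3)) - kappa p d * s * t powr (1/3)\<rfloor>"

definition n_pt :: "real \<Rightarrow> real \<Rightarrow> real \<Rightarrow> real \<Rightarrow> int" where
  "n_pt p d r t = \<lfloor>p * (d - 1) / (d * (d - p)) * t + (kappa p d)^2 * (2 / (d * (d - 1))) * r * t powr (2/3)\<rfloor>"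

end

theory Submission
  imports Defs
begin


definition bpmf :: "real \<Rightarrow> nat \<Rightarrow> nat \<Rightarrow> real" where
  "bpmf q n j = real (n choose j) * q ^ j * (1 - q) ^ (n - j)"

lemma bpmf_nonneg: "0 \<le> q \<Longrightarrow> q \<le> 1 \<Longrightarrow> 0 \<le> bpmf q n j"
  by (simp add: bpmf_def)

lemma bpmf_sum: "(\<Sum>j\<le>n. bpmf q n j) = 1"
proof -
  have "(q + (1 - q)) ^ n = (\<Sum>j\<le>n. real (n choose j) * q ^ j * (1 - q) ^ (n - j))"
    by (rule binomial_ring)
  then show ?thesis by (simp add: bpmf_def)
qed

lemma bpmf_le1:
  assumes "0 \<le> q" "q \<le> 1" "j \<le> n" shows "bpmf q n j \<le> 1"
proof -
  have "bpmf q n j \<le> (\<Sum>i\<le>n. bpmf q n i)"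
    by (rule member_le_sum) (use assms bpmf_nonneg in auto)
  then show ?thesis by (simp add: bpmf_sum)
qed

lemma bpmf_step:
  assumes "j < n"
  shows "bpmf q n (Suc j) * real (Suc j) * (1 - q) = bpmf q n j * real (n - j) * q"
proof -
  have c: "Suc j * (n choose Suc j) = (n - j) * (n choose j)"
    using binomial_absorption[of j n] binomial_absorb_comp[of n j] by simp
  have c': "real (Suc j) * real (n choose Suc j) = real (n - j) * real (n choose j)"
    using c by (metis of_nat_mult)
  have e: "n - j = Suc (n - Suc j)" using assms by simp
  have "bpmf q n (Suc j) * real (Suc j) * (1 - q)
     = (real (Suc j) * real (n choose Suc j)) * q ^ Suc j * (1 - q) ^ (n - Suc j) * (1 - q)"
    by (simp add: bpmf_def)
  also have "\<dots> = (real (n - j) * real (n choose j)) * q ^ j * q * (1 - q) ^ (n - Suc j) * (1 - q)"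
    using c' by (simp add: algebra_simps)
  also have "\<dots> = bpmf q n j * real (n - j) * q"
    by (simp add: bpmf_def e)
  finally show ?thesis .
qed

lemma bpmf_sym:
  assumes "k \<le> n" shows "bpmf q n k = bpmf (1 - q) n (n - k)"
  using assms by (simp add: bpmf_def binomial_symmetric[OF assms])

lemma gs_step:
  assumes q: "0 < q" "q < 1" and j: "j < n" and u: "0 \<le> u" "real (Suc j) \<le> real n * q - u"
  shows "bpmf q n j \<le> (1 - u / (real n * q)) * bpmf q n (Suc j)"
proof -
  define P where "P = bpmf q n (Suc j)"
  define B where "B = bpmf q n j"
  define J where "J = real (Suc j)"
  define N where "N = real n"
  define M where "M = N * q - u"
  have P0: "0 \<le> P" unfolding P_def using q by (intro bpmf_nonneg) auto
  have st: "P * J * (1 - q) = B * (N - J + 1) * q"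
    using bpmf_step[OF j, of q] j unfolding P_def B_def J_def N_def by (simp add: of_nat_diff)
  have N0: "N > 0" using j N_def by simp
  have J1: "1 \<le> J" "J \<le> M" using u unfolding J_def M_def N_def by auto
  have M0: "M \<le> N * q" using u M_def by simp
  have key: "J * (1 - q) * N \<le> M * (N - J + 1)"
  proof -
    have "J * (1 - q) * N \<le> M * ((1 - q) * N)"
      using J1 q N0 by (simp add: mult.assoc mult_right_mono)
    also have "\<dots> \<le> M * (N - J + 1)"
      using J1 M0 by (intro mult_left_mono) (auto simp: algebra_simps)
    finally show ?thesis .
  qed
  have "B * (N - J + 1) * q \<le> (M / (N * q)) * P * (N - J + 1) * q"
  proof -
    have "B * (N - J + 1) * q = P * (J * (1 - q))" using st by (simp add: algebra_simps)
    also have "\<dots> \<le> P * (M * (N - J + 1) / N)"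
      using key N0 P0 by (intro mult_left_mono) (auto simp: field_simps)
    also have "\<dots> = (M / (N * q)) * P * (N - J + 1) * q"
      using q N0 by (simp add: field_simps)
    finally show ?thesis .
  qed
  moreover have "N * q \<le> N * 1" using q N0 by (intro mult_left_mono) auto
  then have "N - J + 1 > 0" using J1 M0 by simp
  then have X0: "(N - J + 1) * q > 0" using q by simp
  ultimately have "B * ((N - J + 1) * q) \<le> (M / (N * q) * P) * ((N - J + 1) * q)"
    by (simp only: mult.assoc)
  then have "B \<le> (M / (N * q)) * P"
    using X0 by (rule mult_right_le_imp_le)
  moreover have "M / (N * q) = 1 - u / (real n * q)" using N0 q unfolding M_def N_def
    by (simp add: field_simps)
  ultimately show ?thesis unfolding B_def P_def by simp
qed

lemma gs:
  assumes q: "0 < q" "q < 1" and km: "k + m \<le> n" and u: "0 \<le> u" "real (k + m) \<le> real n * q - u"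
  shows "bpmf q n k \<le> (1 - u / (real n * q)) ^ m * bpmf q n (k + m)"
  using km u(2)
proof (induction m)
  case 0 then show ?case by simp
next
  case (Suc m)
  have n0: "n > 0" using Suc.prems by simp
  have th0: "0 \<le> 1 - u / (real n * q)"
  proof -
    have "u \<le> real n * q" using Suc.prems(2) by simp
    then show ?thesis using n0 q by (simp add: field_simps)
  qed
  have ih: "bpmf q n k \<le> (1 - u / (real n * q)) ^ m * bpmf q n (k + m)"
    using Suc.prems by (intro Suc.IH) auto
  have "bpmf q n (k + m) \<le> (1 - u / (real n * q)) * bpmf q n (Suc (k + m))"
    using Suc.prems by (intro gs_step q u) auto
  then have "(1 - u / (real n * q)) ^ m * bpmf q n (k + m)
     \<le> (1 - u / (real n * q)) ^ m * ((1 - u / (real n * q)) * bpmf q n (Suc (k + m)))"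
    using th0 by (intro mult_left_mono) auto
  with ih show ?case by (simp add: algebra_simps)
qed

lemma sb_step:
  assumes q: "0 < q" "q < 1" and j: "1 \<le> j" "j \<le> n" and E: "0 \<le> E" "E \<le> real n * q * (1 - q)"
    and jE: "real j \<ge> real n * q - E + 1"
  shows "bpmf q n (j - 1) \<ge> (1 - E / (real n * q * (1 - q))) * bpmf q n j"
proof -
  define N where "N = real n"
  define J where "J = real j"
  define \<rho> where "\<rho> = 1 - E / (N * q * (1 - q))"
  have N0: "N > 0" using j N_def by simp
  have Z: "N * q * (1 - q) > 0" using N0 q by simp
  have r0: "0 \<le> \<rho>" "\<rho> \<le> 1" unfolding \<rho>_def using E Z by (auto simp: N_def field_simps)
  have st: "bpmf q n j * J * (1 - q) = bpmf q n (j - 1) * (N - J + 1) * q"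
    using bpmf_step[of "j - 1" n q] j unfolding J_def N_def by (simp add: of_nat_diff)
  have P0: "0 \<le> bpmf q n j" using q by (intro bpmf_nonneg) auto
  have NJ: "N - J + 1 \<le> N * (1 - q) + E" using jE unfolding N_def J_def by (simp add: algebra_simps)
  have NJ0: "N - J + 1 > 0" using j unfolding N_def J_def by simp
  have alg: "(N * q - E) * (1 - q) * (N * q * (1 - q)) - (N * q * (1 - q) - E) * (N * (1 - q) + E) * q = q * E^2"
    by (simp add: algebra_simps power2_eq_square)
  have A: "\<rho> * (N * (1 - q) + E) * q \<le> (N * q - E) * (1 - q)"
  proof -
    have "\<rho> * (N * (1 - q) + E) * q = (N * q * (1 - q) - E) * (N * (1 - q) + E) * q / (N * q * (1 - q))"
    proof -
      have rr: "\<rho> = (N * q * (1 - q) - E) / (N * q * (1 - q))" unfolding \<rho>_def using Z N0 q by (simp add: diff_divide_distrib)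
      show ?thesis by (simp add: rr)
    qed
    also have "\<dots> \<le> (N * q - E) * (1 - q) * (N * q * (1 - q)) / (N * q * (1 - q))"
    proof (rule divide_right_mono)
      have "q * E^2 \<ge> 0" using q by simp
      then show "(N * q * (1 - q) - E) * (N * (1 - q) + E) * q \<le> (N * q - E) * (1 - q) * (N * q * (1 - q))"
        using alg by linarith
    qed (use Z in linarith)
    also have "\<dots> = (N * q - E) * (1 - q)" by (rule nonzero_mult_div_cancel_right) (use Z in linarith)
    finally show ?thesis .
  qed
  have B: "\<rho> * (N - J + 1) * q \<le> \<rho> * (N * (1 - q) + E) * q"
    using mult_right_mono[OF mult_left_mono[OF NJ r0(1)], of q] q by simp
  have C: "(N * q - E) * (1 - q) \<le> J * (1 - q)"
    using jE q unfolding N_def J_def by (intro mult_right_mono) auto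
  have "\<rho> * (N - J + 1) * q \<le> J * (1 - q)" using A B C by linarith
  then have "bpmf q n j * (\<rho> * (N - J + 1) * q) \<le> bpmf q n j * (J * (1 - q))"
    using P0 by (rule mult_left_mono)
  then have "(\<rho> * bpmf q n j) * ((N - J + 1) * q) \<le> bpmf q n (j - 1) * ((N - J + 1) * q)"
  proof -
    assume h: "bpmf q n j * (\<rho> * (N - J + 1) * q) \<le> bpmf q n j * (J * (1 - q))"
    have "(\<rho> * bpmf q n j) * ((N - J + 1) * q) = bpmf q n j * (\<rho> * (N - J + 1) * q)" by (simp only: mult_ac)
    also have "\<dots> \<le> bpmf q n j * (J * (1 - q))" by (rule h)
    also have "\<dots> = bpmf q n j * J * (1 - q)" by (simp only: mult.assoc)
    also have "\<dots> = bpmf q n (j - 1) * (N - J + 1) * q" by (rule st)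
    also have "\<dots> = bpmf q n (j - 1) * ((N - J + 1) * q)" by (simp only: mult.assoc)
    finally show ?thesis .
  qed
  then have "\<rho> * bpmf q n j \<le> bpmf q n (j - 1)"
    by (rule mult_right_le_imp_le) (use NJ0 q in simp_all)
  then show ?thesis unfolding \<rho>_def N_def by simp
qed

lemma sb:
  assumes q: "0 < q" "q < 1" and kn: "k \<le> n" and D: "0 \<le> D" and kD: "real k \<ge> real n * q - D"
    and Lk: "L \<le> k" and LD: "real L * (D + real L) \<le> real n * q * (1 - q) / 2"
  shows "bpmf q n k \<le> 2 / (real L + 1)"
proof (cases "L = 0")
  case True
  then show ?thesis using bpmf_le1[of q k n] q kn by simp
next
  case False
  define E where "E = D + real L"
  define \<epsilon> where "\<epsilon> = E / (real n * q * (1 - q))"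
  have L1: "real L \<ge> 1" using False by simp
  have E0: "E \<ge> 1" unfolding E_def using D L1 by simp
  have "real L * E \<ge> 1" using L1 E0 by (metis mult_mono' mult_1 zero_le_one order_trans)
  then have Z: "real n * q * (1 - q) > 0" using LD E_def by simp
  have LE: "real L * \<epsilon> \<le> 1/2" unfolding \<epsilon>_def using LD Z E_def by (simp add: field_simps)
  have EZ: "E \<le> real n * q * (1 - q)"
  proof -
    have "E \<le> real L * E" using L1 E0 by simp
    then show ?thesis using LD E_def Z by simp
  qed
  have eps0: "\<epsilon> \<ge> 0" unfolding \<epsilon>_def using Z E0 by simp
  have claim: "i \<le> L \<Longrightarrow> bpmf q n (k - i) \<ge> (1 - real i * \<epsilon>) * bpmf q n k" for i
  proof (induction i)
    case 0 then show ?case by simp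
  next
    case (Suc i)
    have ih: "bpmf q n (k - i) \<ge> (1 - real i * \<epsilon>) * bpmf q n k" using Suc by simp
    have st: "bpmf q n (k - i - 1) \<ge> (1 - \<epsilon>) * bpmf q n (k - i)"
      unfolding \<epsilon>_def
    proof (rule sb_step[OF q])
      show "1 \<le> k - i" using Suc.prems Lk by simp
      show "k - i \<le> n" using kn by simp
      show "0 \<le> E" using E0 by simp
      show "E \<le> real n * q * (1 - q)" by (rule EZ)
      show "real n * q - E + 1 \<le> real (k - i)"
        using Suc.prems Lk kD unfolding E_def by (simp add: of_nat_diff)
    qed
    have r0: "0 \<le> 1 - \<epsilon>"
    proof -
      have "\<epsilon> \<le> real L * \<epsilon>" using L1 eps0 by (simp add: mult_le_cancel_right1)
      then show ?thesis using LE by simp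
    qed
    have "(1 - \<epsilon>) * ((1 - real i * \<epsilon>) * bpmf q n k) \<le> (1 - \<epsilon>) * bpmf q n (k - i)"
      using ih r0 by (rule mult_left_mono)
    moreover have "(1 - real (Suc i) * \<epsilon>) * bpmf q n k \<le> (1 - \<epsilon>) * ((1 - real i * \<epsilon>) * bpmf q n k)"
    proof -
      have "(1 - real (Suc i) * \<epsilon>) \<le> (1 - \<epsilon>) * (1 - real i * \<epsilon>)"
        using eps0 by (simp add: algebra_simps)
      then have "(1 - real (Suc i) * \<epsilon>) * bpmf q n k \<le> ((1 - \<epsilon>) * (1 - real i * \<epsilon>)) * bpmf q n k"
        using bpmf_nonneg[of q n k] q by (intro mult_right_mono) auto
      then show ?thesis by (simp only: mult.assoc)
    qed
    moreover have eq: "k - i - 1 = k - Suc i" by simp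
    moreover have "(1 - \<epsilon>) * bpmf q n (k - i) \<le> bpmf q n (k - Suc i)" using st by (simp only: eq)
    ultimately show ?case by linarith
  qed
  have inj: "inj_on (\<lambda>i. k - i) {..L}" using Lk by (auto simp: inj_on_def)
  have "(\<Sum>i\<le>L. bpmf q n (k - i)) = (\<Sum>j\<in>(\<lambda>i. k - i) ` {..L}. bpmf q n j)"
    using inj by (simp add: sum.reindex)
  also have "\<dots> \<le> (\<Sum>j\<le>n. bpmf q n j)"
    using kn q by (intro sum_mono2) (auto intro: bpmf_nonneg)
  also have "\<dots> = 1" by (rule bpmf_sum)
  finally have up: "(\<Sum>i\<le>L. bpmf q n (k - i)) \<le> 1" .
  have "(\<Sum>i\<le>L. (1/2) * bpmf q n k) \<le> (\<Sum>i\<le>L. bpmf q n (k - i))"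
  proof (rule sum_mono)
    fix i assume i: "i \<in> {..L}"
    have "real i * \<epsilon> \<le> real L * \<epsilon>" using i eps0 by (simp add: mult_right_mono)
    then have "1/2 \<le> 1 - real i * \<epsilon>" using LE by simp
    then have "(1/2) * bpmf q n k \<le> (1 - real i * \<epsilon>) * bpmf q n k"
      using bpmf_nonneg[of q n k] q by (intro mult_right_mono) auto
    also have "\<dots> \<le> bpmf q n (k - i)" using claim i by simp
    finally show "(1/2) * bpmf q n k \<le> bpmf q n (k - i)" .
  qed
  moreover have "(\<Sum>i\<le>L. (1/2) * bpmf q n k) = (real L + 1) * bpmf q n k / 2" by simp
  ultimately have "(real L + 1) * bpmf q n k / 2 \<le> 1" using up by linarith
  then have "bpmf q n k * (real L + 1) \<le> 2" by (simp add: mult.commute)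
  then show ?thesis by (subst pos_le_divide_eq) auto
qed



lemma natfloor: assumes "0 \<le> (x::real)" shows "real (nat \<lfloor>x\<rfloor>) \<le> x" "x < real (nat \<lfloor>x\<rfloor>) + 1"
proof -
  have "0 \<le> \<lfloor>x\<rfloor>" using assms by simp
  then have e: "real (nat \<lfloor>x\<rfloor>) = real_of_int \<lfloor>x\<rfloor>" by simp
  show "real (nat \<lfloor>x\<rfloor>) \<le> x" unfolding e by (rule of_int_floor_le)
  show "x < real (nat \<lfloor>x\<rfloor>) + 1" unfolding e by (rule real_of_int_floor_add_one_gt)
qed

lemma one_minus_le_exp: "(1::real) - x \<le> exp (- x)"
  using exp_ge_add_one_self[of "-x"] by simp

lemma lin4: "(b::real) \<le> a \<Longrightarrow> b = Q - R/2 \<Longrightarrow> R \<le> 1 \<Longrightarrow> S \<le> Q \<Longrightarrow> -a \<le> 1/2 + -S"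
  by linarith

lemma fl:
  assumes q: "0 < q" "q < 1" and c: "c1 > 0" "c2 > 0" and Ds: "Ds \<ge> 0" and T1: "T \<ge> 1"
    and T2: "T \<ge> (Ds/2 + 4) / (c1 * q)" and T3: "Ds > 0 \<Longrightarrow> T \<ge> 6 / Ds"
    and kn: "k \<le> n" and nl: "real n \<ge> c1 * T^2" and nu: "real n \<le> c2 * T^2"
    and dev: "\<bar>real n * q - real k - Ds * T\<bar> \<le> 3"
  shows "T * bpmf q n k \<le> exp (1/2) * exp (- (Ds^2 / (16 * c2))) * (2 + (2 * Ds + 16) / (c1 * q * (1 - q)))"
proof -
  define \<delta> where "\<delta> = real n * q - real k"
  define lam where "lam = min 1 (c1 * q * (1 - q) / (2 * (Ds/2 + 4)))"
  define L where "L = nat \<lfloor>lam * T\<rfloor>"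
  define G where "G = exp (- (Ds^2 / (16 * c2)))"
  have T0: "T > 0" using T1 by simp
  have lam0: "lam > 0" unfolding lam_def using q c Ds by simp
  have lam1: "lam \<le> 1" unfolding lam_def by simp
  have lam2: "lam * (Ds/2 + 4) \<le> c1 * q * (1 - q) / 2"
  proof -
    have "lam \<le> c1 * q * (1 - q) / (2 * (Ds/2 + 4))" unfolding lam_def by simp
    then have "lam * (Ds/2 + 4) \<le> c1 * q * (1 - q) / (2 * (Ds/2 + 4)) * (Ds/2 + 4)"
      using Ds by (intro mult_right_mono) auto
    also have "\<dots> = c1 * q * (1 - q) / 2" using Ds by (simp add: field_simps)
    finally show ?thesis .
  qed
  have lam3: "2 / lam \<le> 2 + (2 * Ds + 16) / (c1 * q * (1 - q))"
  proof (cases "1 \<le> c1 * q * (1 - q) / (2 * (Ds/2 + 4))")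
    case True
    then have "lam = 1" unfolding lam_def by simp
    moreover have "(2 * Ds + 16) / (c1 * q * (1 - q)) \<ge> 0" using q c Ds by simp
    ultimately show ?thesis by simp
  next
    case False
    then have "lam = c1 * q * (1 - q) / (2 * (Ds/2 + 4))" unfolding lam_def by simp
    then have "2 / lam = 2 * (2 * (Ds/2 + 4)) / (c1 * q * (1 - q))" by simp
    also have "\<dots> = (2 * Ds + 16) / (c1 * q * (1 - q))" by (simp add: algebra_simps)
    finally have "2 / lam = (2 * Ds + 16) / (c1 * q * (1 - q))" .
    then show ?thesis by simp
  qed
  have LT: "real L \<le> lam * T" "lam * T < real L + 1"
    unfolding L_def using natfloor[of "lam * T"] lam0 T0 by auto
  have "lam * T \<le> 1 * T" using lam1 T0 by (intro mult_right_mono) auto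
  then have LT1: "real L \<le> T" using LT by simp
  have "c1 * T^2 > 0" using T0 c by simp
  then have n0: "real n > 0" using nl by linarith
  have G1: "G \<le> 1" unfolding G_def using c by simp
  have G0: "G > 0" unfolding G_def by simp
  have win: "bpmf q n k' \<le> 2 / (lam * T)"
    if k'n: "k' \<le> n" and D0: "0 \<le> D" and DU: "D \<le> Ds * T / 2 + 3" and k'D: "real k' \<ge> real n * q - D" for k' D
  proof -
    have "real L * (D + real L) \<le> (lam * T) * (T * (Ds/2 + 4))"
    proof (rule mult_mono)
      show "real L \<le> lam * T" by (rule LT)
      show "D + real L \<le> T * (Ds/2 + 4)" using DU LT1 T1 Ds by (simp add: algebra_simps)
      show "0 \<le> lam * T" using lam0 T0 by simp
      show "0 \<le> D + real L" using D0 by simp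
    qed
    also have "\<dots> = (lam * (Ds/2 + 4)) * T^2" by (simp add: power2_eq_square algebra_simps)
    also have "\<dots> \<le> (c1 * q * (1 - q) / 2) * T^2" using lam2 by (intro mult_right_mono) auto
    also have "\<dots> \<le> real n * q * (1 - q) / 2"
    proof -
      have "c1 * T^2 * (q * (1 - q)) \<le> real n * (q * (1 - q))" using nl q by (intro mult_right_mono) auto
      moreover have "(c1 * q * (1 - q) / 2) * T^2 = c1 * T^2 * (q * (1 - q)) / 2" by (simp add: mult_ac)
      moreover have "real n * q * (1 - q) / 2 = real n * (q * (1 - q)) / 2" by (simp add: mult_ac)
      ultimately show ?thesis by linarith
    qed
    finally have LD: "real L * (D + real L) \<le> real n * q * (1 - q) / 2" .
    have Lk: "L \<le> k'"
    proof -
      have "c1 * q * T \<ge> Ds/2 + 4" using T2 c q by (simp add: field_simps)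
      then have "c1 * q * T * T \<ge> (Ds/2 + 4) * T" using T0 by (intro mult_right_mono) auto
      moreover have "real n * q \<ge> c1 * T^2 * q" using nl q by (intro mult_right_mono) auto
      moreover have "(Ds/2 + 4) * T = Ds * T / 2 + 4 * T" by (simp add: algebra_simps)
      moreover have "c1 * T^2 * q = c1 * q * T * T" by (simp add: power2_eq_square mult_ac)
      ultimately have "real n * q - D \<ge> T" using DU Ds T1 by linarith
      then have "real L \<le> real k'" using LT1 k'D by linarith
      then show ?thesis by simp
    qed
    have "bpmf q n k' \<le> 2 / (real L + 1)"
      by (rule sb[OF q k'n D0 k'D Lk LD])
    also have "\<dots> \<le> 2 / (lam * T)"
      using LT lam0 T0 by (intro divide_left_mono) auto
    finally show ?thesis .
  qed
  have main: "bpmf q n k \<le> exp (1/2) * G * (2 / (lam * T))"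
  proof (cases "\<delta> \<le> 2")
    case True
    have "Ds = 0"
    proof (rule ccontr)
      assume "Ds \<noteq> 0"
      then have "Ds > 0" using Ds by simp
      then have "T \<ge> 6 / Ds" by (rule T3)
      then have "Ds * T \<ge> 6" using \<open>Ds > 0\<close> by (simp add: field_simps)
      then show False using dev True \<delta>_def by linarith
    qed
    then have G: "G = 1" unfolding G_def by simp
    have "bpmf q n k \<le> 2 / (lam * T)"
      by (rule win[OF kn, of 2]) (use True \<delta>_def Ds T0 in \<open>auto intro: mult_nonneg_nonneg\<close>)
    also have "\<dots> \<le> exp (1/2) * (2 / (lam * T))"
      using mult_right_mono[of 1 "exp (1/2)" "2 / (lam * T)"] lam0 T0 by simp
    finally show ?thesis using G by simp
  next
    case False
    define m where "m = nat \<lfloor>\<delta> / 2\<rfloor>"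
    have m: "real m \<le> \<delta> / 2" "\<delta> / 2 < real m + 1"
      unfolding m_def using natfloor[of "\<delta>/2"] False by auto
    have dq: "\<delta> \<le> real n * q" unfolding \<delta>_def by simp
    have kmn: "k + m \<le> n"
    proof -
      have "real (k + m) \<le> real n * q" using m dq \<delta>_def by simp
      also have "\<dots> \<le> real n" using q n0 by (simp add: mult_left_le)
      finally show ?thesis by simp
    qed
    have g: "bpmf q n k \<le> (1 - (\<delta>/2) / (real n * q)) ^ m * bpmf q n (k + m)"
    proof (rule gs[OF q kmn])
      show "0 \<le> \<delta>/2" using False by simp
      show "real (k + m) \<le> real n * q - \<delta>/2" using m(1) unfolding \<delta>_def by (simp add: field_simps)
    qed
    have x0: "0 \<le> 1 - (\<delta>/2) / (real n * q)" using dq n0 q False by (simp add: field_simps)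
    have "(1 - (\<delta>/2) / (real n * q)) ^ m \<le> exp (- ((\<delta>/2) / (real n * q))) ^ m"
      using x0 one_minus_le_exp by (intro power_mono) auto
    also have "\<dots> = exp (- (real m * ((\<delta>/2) / (real n * q))))" by (simp add: exp_of_nat_mult[symmetric])
    also have "\<dots> \<le> exp (1/2) * G"
    proof -
      have nq0: "real n * q > 0" using n0 q by simp
      have "real m * ((\<delta>/2) / (real n * q)) \<ge> (\<delta>/2 - 1) * ((\<delta>/2) / (real n * q))"
        using m False nq0 by (intro mult_right_mono) auto
      moreover have "(\<delta>/2 - 1) * ((\<delta>/2) / (real n * q)) = \<delta>^2 / (4 * (real n * q)) - (\<delta> / (real n * q)) / 2"
        using n0 q by (simp add: field_simps power2_eq_square)
      moreover have "\<delta> / (real n * q) \<le> 1" using dq nq0 by simp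
      moreover have "\<delta>^2 / (4 * (real n * q)) \<ge> Ds^2 / (16 * c2)"
      proof (cases "Ds = 0")
        case True then show ?thesis using nq0 by simp
      next
        case F: False
        then have "Ds > 0" using Ds by simp
        then have "T \<ge> 6 / Ds" by (rule T3)
        then have "Ds * T \<ge> 6" using \<open>Ds > 0\<close> by (simp add: field_simps)
        then have d1: "\<delta> \<ge> Ds * T / 2" using dev \<delta>_def by linarith
        have "(Ds * T / 2)^2 \<le> \<delta>^2" using d1 \<open>Ds > 0\<close> T0 by (intro power_mono) auto
        moreover have "4 * (real n * q) \<le> 4 * (c2 * T^2)"
        proof -
          have "real n * q \<le> real n" using q n0 by (simp add: mult_left_le)
          then show ?thesis using nu by linarith
        qed
        ultimately have "(Ds * T / 2)^2 / (4 * (c2 * T^2)) \<le> \<delta>^2 / (4 * (real n * q))"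
          using nq0 by (intro frac_le) auto
        moreover have "(Ds * T / 2)^2 / (4 * (c2 * T^2)) = Ds^2 / (16 * c2)"
          using T0 c by (simp add: field_simps power2_eq_square)
        ultimately show ?thesis by simp
      qed
      ultimately have "- (real m * ((\<delta>/2) / (real n * q))) \<le> 1/2 + (- (Ds^2 / (16 * c2)))"
        by (rule lin4)
      then have "exp (- (real m * ((\<delta>/2) / (real n * q)))) \<le> exp (1/2 + (- (Ds^2 / (16 * c2))))"
        by (simp only: exp_le_cancel_iff)
      then show ?thesis unfolding G_def by (simp only: exp_add)
    qed
    finally have pw: "(1 - (\<delta>/2) / (real n * q)) ^ m \<le> exp (1/2) * G" .
    have w: "bpmf q n (k + m) \<le> 2 / (lam * T)"
    proof (rule win[OF kmn, of "\<delta>/2 + 1"])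
      show "0 \<le> \<delta>/2 + 1" using False by simp
      show "\<delta>/2 + 1 \<le> Ds * T / 2 + 3" using dev \<delta>_def by linarith
      show "real n * q - (\<delta>/2 + 1) \<le> real (k + m)" using m(2) unfolding \<delta>_def by (simp add: field_simps)
    qed
    have b0: "0 \<le> bpmf q n (k + m)" using q by (intro bpmf_nonneg) auto
    have "bpmf q n k \<le> (exp (1/2) * G) * bpmf q n (k + m)"
      using g pw b0 by (meson mult_right_mono order_trans)
    also have "\<dots> \<le> (exp (1/2) * G) * (2 / (lam * T))"
      using w G0 by (intro mult_left_mono) auto
    finally show ?thesis .
  qed
  have "T * bpmf q n k \<le> T * (exp (1/2) * G * (2 / (lam * T)))"
    using main T0 by (intro mult_left_mono) auto
  also have "\<dots> = exp (1/2) * G * (2 / lam)" using T0 lam0 by (simp add: field_simps)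
  also have "\<dots> \<le> exp (1/2) * G * (2 + (2 * Ds + 16) / (c1 * q * (1 - q)))"
    using lam3 G0 by (intro mult_left_mono) auto
  finally show ?thesis unfolding G_def .
qed



lemma powi_ident:
  fixes d A B :: nat
  assumes d: "d \<ge> 2" and BA: "B \<le> A"
  shows "(real d / (real d - 1)) powi (- (int A + 1) + int d * (int B + 1))
       * (real d ^ d / (real d - 1) ^ (d - 1)) powi (- (int B + 1)) * real (A choose B)
       = bpmf (1 / real d) A B / real d"
proof -
  define dd where "dd = real d"
  define D' where "D' = real d - 1"
  have dd0: "dd > 0" and D0: "D' > 0" using d unfolding dd_def D'_def by auto
  have e1: "- (int A + 1) + int d * (int B + 1) = int (d * (B + 1)) + - int (A + 1)" by (simp add: algebra_simps)
  have e2: "- (int B + 1) = - int (B + 1)" by simp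
  have "(dd / D') powi (- (int A + 1) + int d * (int B + 1)) = (dd / D') ^ (d * (B + 1)) / (dd / D') ^ (A + 1)"
  proof -
    have ne: "dd / D' \<noteq> 0" using dd0 D0 by simp
    have "(dd / D') powi (int (d * (B + 1)) + - int (A + 1)) = (dd / D') powi int (d * (B + 1)) * (dd / D') powi (- int (A + 1))"
      using ne by (rule power_int_add[OF disjI1])
    also have "\<dots> = (dd / D') ^ (d * (B + 1)) / (dd / D') ^ (A + 1)"
      by (simp only: power_int_minus power_int_of_nat divide_inverse)
    finally show ?thesis unfolding e1 .
  qed
  moreover have "(dd ^ d / D' ^ (d - 1)) powi (- (int B + 1)) = 1 / (dd ^ d / D' ^ (d - 1)) ^ (B + 1)"
    unfolding e2 by (simp only: power_int_minus power_int_of_nat inverse_eq_divide)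
  ultimately have L: "(dd / D') powi (- (int A + 1) + int d * (int B + 1))
       * (dd ^ d / D' ^ (d - 1)) powi (- (int B + 1))
     = (dd / D') ^ (d * (B + 1)) / (dd / D') ^ (A + 1) / (dd ^ d / D' ^ (d - 1)) ^ (B + 1)" by simp
  have p1: "(dd / D') ^ (d * (B + 1)) = dd ^ (d * (B + 1)) / D' ^ (d * (B + 1))" by (simp add: power_divide)
  have p2: "(dd ^ d / D' ^ (d - 1)) ^ (B + 1) = dd ^ (d * (B + 1)) / D' ^ ((d - 1) * (B + 1))"
    by (simp only: power_divide power_mult[symmetric] mult.commute)
  have p3: "D' ^ (d * (B + 1)) = D' ^ ((d - 1) * (B + 1)) * D' ^ (B + 1)"
  proof -
    have "d * (B + 1) = (d - 1) * (B + 1) + (B + 1)" using d by (cases d) (auto simp: algebra_simps)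
    then show ?thesis by (simp add: power_add)
  qed
  have p4: "D' ^ (A + 1) = D' ^ (A - B) * D' ^ (B + 1)"
  proof -
    have "A + 1 = (A - B) + (B + 1)" using BA by simp
    then show ?thesis by (metis power_add)
  qed
  have p5: "dd ^ (A + 1) = dd ^ B * dd ^ (A - B) * dd"
  proof -
    have "A + 1 = B + (A - B) + 1" using BA by simp
    then show ?thesis by (metis power_add power_one_right)
  qed
  have "(dd / D') ^ (d * (B + 1)) / (dd / D') ^ (A + 1) / (dd ^ d / D' ^ (d - 1)) ^ (B + 1)
      = D' ^ (A - B) / dd ^ (A + 1)"
  proof -
    have q1: "(dd / D') ^ (d * (B + 1)) = dd ^ (d * (B + 1)) / (D' ^ ((d - 1) * (B + 1)) * D' ^ (B + 1))"
      using p1 p3 by simp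
    have q2: "(dd / D') ^ (A + 1) = dd ^ (A + 1) / (D' ^ (A - B) * D' ^ (B + 1))"
      using p4 by (simp add: power_divide)
    have gen: "\<And>X Y Z W V :: real. X > 0 \<Longrightarrow> Y > 0 \<Longrightarrow> Z > 0 \<Longrightarrow> W > 0 \<Longrightarrow> V > 0 \<Longrightarrow>
        (X / (Y * Z)) / (V / (W * Z)) / (X / Y) = W / V"
      by (simp add: field_simps)
    show ?thesis unfolding q1 q2 p2 by (rule gen) (use dd0 D0 in simp_all)
  qed
  also have "\<dots> = (1 / dd) ^ B * (1 - 1 / dd) ^ (A - B) / dd"
  proof -
    have "1 - 1 / dd = D' / dd" using dd0 unfolding D'_def dd_def by (simp add: field_simps)
    then show ?thesis unfolding p5 by (simp add: power_divide)
  qed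
  finally have "(dd / D') powi (- (int A + 1) + int d * (int B + 1))
       * (dd ^ d / D' ^ (d - 1)) powi (- (int B + 1)) = (1 / dd) ^ B * (1 - 1 / dd) ^ (A - B) / dd"
    using L by simp
  then show ?thesis unfolding bpmf_def dd_def D'_def by (simp add: algebra_simps)
qed

lemma gauss_exp:
  fixes c x :: real
  assumes c: "c > 0" and x: "x \<ge> 0"
  shows "exp (- (c * x^2)) \<le> exp (1 / (4 * c)) * exp (- x)"
    and "x * exp (- (c * x^2)) \<le> exp (1 / c) * exp (- x)"
proof -
  have "(2 * c * x - 1)^2 / (4 * c) \<ge> 0" using c by simp
  moreover have "(2 * c * x - 1)^2 / (4 * c) = c * x^2 - x + 1 / (4 * c)"
    using c by (simp add: field_simps power2_eq_square)
  ultimately have "- (c * x^2) \<le> 1 / (4 * c) + - x" by linarith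
  then have "exp (- (c * x^2)) \<le> exp (1 / (4 * c) + - x)" by (simp only: exp_le_cancel_iff)
  then show "exp (- (c * x^2)) \<le> exp (1 / (4 * c)) * exp (- x)" by (simp only: exp_add)
  have "(c * x - 1)^2 / c \<ge> 0" using c by simp
  moreover have "(c * x - 1)^2 / c = c * x^2 - 2 * x + 1 / c"
    using c by (simp add: field_simps power2_eq_square)
  ultimately have "x + - (c * x^2) \<le> 1 / c + - x" by linarith
  then have "exp (x + - (c * x^2)) \<le> exp (1 / c + - x)" by (simp only: exp_le_cancel_iff)
  then have h: "exp x * exp (- (c * x^2)) \<le> exp (1 / c) * exp (- x)" by (simp only: exp_add)
  have "x \<le> exp x" using exp_ge_add_one_self[of x] by linarith
  then have "x * exp (- (c * x^2)) \<le> exp x * exp (- (c * x^2))" by (intro mult_right_mono) auto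
  with h show "x * exp (- (c * x^2)) \<le> exp (1 / c) * exp (- x)" by linarith
qed



lemma kappa_pos: assumes "0 < p" "p < 1" "d \<ge> 2" shows "kappa p d > 0"
proof -
  have "2 * (1 - p) * p > 0" using assms by simp
  moreover have "d * (d - 1) > 0" using assms by simp
  moreover have "d - p > 0" using assms by simp
  ultimately show ?thesis unfolding kappa_def by (intro divide_pos_pos mult_pos_pos) auto
qed

lemma T_ge:
  fixes M t :: real
  assumes "M \<ge> 1" "t \<ge> M ^ 3" shows "t powr (1/3) \<ge> M"
proof -
  have "(M ^ 3) powr (1/3) \<le> t powr (1/3)" using assms by (intro powr_mono2) auto
  moreover have "(M ^ 3) powr (1/3) = M"
  proof -
    have M0: "M > 0" using assms by simp
    have "ln (M ^ 3) = 3 * ln M" using M0 by (simp add: ln_realpow)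
    then show ?thesis using M0 by (simp add: powr_def)
  qed
  ultimately show ?thesis by simp
qed

lemma T_sq: fixes t :: real assumes "t > 0" shows "t powr (2/3) = (t powr (1/3))^2"
proof -
  have "(t powr (1/3))^2 = t powr (1/3) * t powr (1/3)" by (simp add: power2_eq_square)
  also have "\<dots> = t powr (1/3 + 1/3)" by (rule powr_add[symmetric])
  also have "(1/3 + 1/3 :: real) = 2/3" by simp
  finally show ?thesis by simp
qed

lemma final_bound:
  fixes mu c2 B0 B1 x :: real
  assumes mu: "mu > 0" and c2: "c2 > 0" and B: "B0 \<ge> 0" "B1 \<ge> 0" and x: "x \<ge> 0"
  shows "mu * (exp (1/2) * exp (- ((mu * x)^2 / (16 * c2))) * (B0 + B1 * (mu * x)))
    \<le> (mu * exp (1/2) * (B0 * exp (1 / (4 * (mu^2 / (16 * c2)))) + B1 * mu * exp (1 / (mu^2 / (16 * c2))))) * exp (- x)"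
proof -
  define cc where "cc = mu^2 / (16 * c2)"
  have cc0: "cc > 0" unfolding cc_def using mu c2 by simp
  have e: "exp (- ((mu * x)^2 / (16 * c2))) = exp (- (cc * x^2))" unfolding cc_def
    by (simp add: power_mult_distrib)
  have g1: "exp (- (cc * x^2)) \<le> exp (1 / (4 * cc)) * exp (- x)" and g2: "x * exp (- (cc * x^2)) \<le> exp (1 / cc) * exp (- x)"
    using gauss_exp[OF cc0 x] by auto
  have "B0 * exp (- (cc * x^2)) \<le> B0 * (exp (1 / (4 * cc)) * exp (- x))" using g1 B(1) by (rule mult_left_mono)
  moreover have "B1 * mu * (x * exp (- (cc * x^2))) \<le> B1 * mu * (exp (1 / cc) * exp (- x))"
    using g2 B mu by (intro mult_left_mono) auto
  ultimately have "B0 * exp (- (cc * x^2)) + B1 * mu * (x * exp (- (cc * x^2)))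
     \<le> B0 * (exp (1 / (4 * cc)) * exp (- x)) + B1 * mu * (exp (1 / cc) * exp (- x))" by linarith
  then have "exp (- (cc * x^2)) * (B0 + B1 * (mu * x)) \<le> (B0 * exp (1 / (4 * cc)) + B1 * mu * exp (1 / cc)) * exp (- x)"
    by (simp add: algebra_simps)
  then have "(mu * exp (1/2)) * (exp (- (cc * x^2)) * (B0 + B1 * (mu * x))) \<le> (mu * exp (1/2)) * ((B0 * exp (1 / (4 * cc)) + B1 * mu * exp (1 / cc)) * exp (- x))"
    using mu by (intro mult_left_mono) auto
  then show ?thesis unfolding e cc_def[symmetric] by (simp add: mult_ac)
qed


theorem proposition5p5:
  fixes p :: real and d :: nat and r1 r2 :: real
  assumes "0 < p" and "p < 1" and "d \<ge> 2" and "r2 - r1 > 0"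
  shows "\<exists>C1::real. \<forall>s1 s2::real. \<forall>\<^sub>F t in at_top.
    (let x1 = x_pt p (real d) r1 s1 t; x2 = x_pt p (real d) r2 s2 t;
         n1 = n_pt p (real d) r1 t; n2 = n_pt p (real d) r2 t
     in kappa p (real d) * t powr (1/3)
        * (real d / (real d - 1)) powi (x2 + int d * n2 - (x1 + int d * n1))
        * (real d ^ d / (real d - 1) ^ (d - 1)) powi (n1 - n2)
        * int_binom (x1 - x2 - 1) (n2 - n1 - 1)
        \<le> C1 * exp (- \<bar>s2 - s1\<bar>))"
proof -
  define K where "K = kappa p (real d)"
  define dd where "dd = real d"
  have dd2: "dd \<ge> 2" unfolding dd_def using assms by simp
  have K0: "K > 0" unfolding K_def using kappa_pos assms by simp
  define db where "db = K^2 * (2 / (dd * (dd - 1))) * (r2 - r1)"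
  have db0: "db > 0" unfolding db_def using K0 dd2 assms by simp
  define c1 where "c1 = dd * db / 2"
  define c2 where "c2 = 2 * dd * db"
  define Qv where "Qv = (1 / dd) * (1 - 1 / dd)"
  define mu where "mu = K / dd"
  define B0 where "B0 = 2 + 16 / (c1 * Qv)"
  define B1 where "B1 = 2 / (c1 * Qv)"
  define C1 where "C1 = mu * exp (1/2) * (B0 * exp (1 / (4 * (mu^2 / (16 * c2)))) + B1 * mu * exp (1 / (mu^2 / (16 * c2))))"
  have c10: "c1 > 0" and c20: "c2 > 0" unfolding c1_def c2_def using db0 dd2 by auto
  have Qv0: "Qv > 0" unfolding Qv_def using dd2 by (simp add: field_simps)
  have mu0: "mu > 0" unfolding mu_def using K0 dd2 by simp
  have B00: "B0 \<ge> 0" and B10: "B1 \<ge> 0" unfolding B0_def B1_def using c10 Qv0 by auto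
  have C10: "C1 \<ge> 0" unfolding C1_def using mu0 B00 B10 by simp
  have FLc: "2 + (2 * Ds + 16) / (c1 * Qv) = B0 + B1 * Ds" for Ds
    unfolding B0_def B1_def using c10 Qv0 by (simp add: field_simps)
  show ?thesis
  proof (intro exI[of _ C1] allI)
    fix s1 s2 :: real
    define x where "x = \<bar>s2 - s1\<bar>"
    define Ds where "Ds = mu * x"
    have x0: "x \<ge> 0" unfolding x_def by simp
    have Ds0: "Ds \<ge> 0" unfolding Ds_def using mu0 x0 by simp
    define T0 where "T0 = max (max 1 ((Ds/2 + 4) / (c1 / dd))) (max (if Ds > 0 then 6 / Ds else 0) ((2 * K * x + 4) / (dd * db)))"
    have T01: "T0 \<ge> 1" unfolding T0_def by simp
    have ev: "\<forall>\<^sub>F t in at_top. t \<ge> T0 ^ 3" by (rule eventually_ge_at_top)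
    show "\<forall>\<^sub>F t in at_top.
    (let x1 = x_pt p (real d) r1 s1 t; x2 = x_pt p (real d) r2 s2 t;
         n1 = n_pt p (real d) r1 t; n2 = n_pt p (real d) r2 t
     in kappa p (real d) * t powr (1/3)
        * (real d / (real d - 1)) powi (x2 + int d * n2 - (x1 + int d * n1))
        * (real d ^ d / (real d - 1) ^ (d - 1)) powi (n1 - n2)
        * int_binom (x1 - x2 - 1) (n2 - n1 - 1)
        \<le> C1 * exp (- \<bar>s2 - s1\<bar>))"
      using ev
    proof eventually_elim
      case (elim t)
      define T where "T = t powr (1/3)"
      have TT0: "T \<ge> T0" unfolding T_def using T_ge[OF T01 elim] .
      have T1: "T \<ge> 1" using TT0 T01 by simp
      have t0: "t > 0" using elim T01 by (smt (verit) one_le_power)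
      have T2: "t powr (2/3) = T^2" unfolding T_def using T_sq[OF t0] .
      define X1 where "X1 = - (K^2 * (2 / (dd - 1)) * r1 * T^2) - K * s1 * T"
      define X2 where "X2 = - (K^2 * (2 / (dd - 1)) * r2 * T^2) - K * s2 * T"
      define N1 where "N1 = p * (dd - 1) / (dd * (dd - p)) * t + K^2 * (2 / (dd * (dd - 1))) * r1 * T^2"
      define N2 where "N2 = p * (dd - 1) / (dd * (dd - p)) * t + K^2 * (2 / (dd * (dd - 1))) * r2 * T^2"
      have x1e: "x_pt p (real d) r1 s1 t = \<lfloor>X1\<rfloor>" unfolding x_pt_def X1_def K_def dd_def T_def T2[unfolded T_def] ..
      have x2e: "x_pt p (real d) r2 s2 t = \<lfloor>X2\<rfloor>" unfolding x_pt_def X2_def K_def dd_def T_def T2[unfolded T_def] ..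
      have n1e: "n_pt p (real d) r1 t = \<lfloor>N1\<rfloor>" unfolding n_pt_def N1_def K_def dd_def T_def T2[unfolded T_def] ..
      have n2e: "n_pt p (real d) r2 t = \<lfloor>N2\<rfloor>" unfolding n_pt_def N2_def K_def dd_def T_def T2[unfolded T_def] ..
      define a where "a = \<lfloor>X1\<rfloor> - \<lfloor>X2\<rfloor> - 1"
      define b where "b = \<lfloor>N2\<rfloor> - \<lfloor>N1\<rfloor> - 1"
      have ex1: "\<lfloor>X2\<rfloor> + int d * \<lfloor>N2\<rfloor> - (\<lfloor>X1\<rfloor> + int d * \<lfloor>N1\<rfloor>) = - (a + 1) + int d * (b + 1)"
        unfolding a_def b_def by (simp add: algebra_simps)
      have ex2: "\<lfloor>N1\<rfloor> - \<lfloor>N2\<rfloor> = - (b + 1)" unfolding b_def by simp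
      define P where "P = dd * db * T^2"
      define R where "R = K * (s2 - s1) * T"
      define Q where "Q = K * x * T"
      have T0': "T > 0" using T1 by simp
      have RQ: "\<bar>R\<bar> = Q" unfolding R_def Q_def x_def using K0 T0' by (simp add: abs_mult)
      have ddb: "dd * db = K^2 * (2 / (dd - 1)) * (r2 - r1)" unfolding db_def using dd2 by (simp add: field_simps)
      have "X1 - X2 = K^2 * (2 / (dd - 1)) * (r2 - r1) * T^2 + K * (s2 - s1) * T"
        unfolding X1_def X2_def by (simp add: algebra_simps diff_divide_distrib)
      then have dX: "X1 - X2 = P + R" unfolding P_def R_def ddb by simp
      have dN: "N2 - N1 = db * T^2" unfolding N1_def N2_def db_def
        by (simp add: algebra_simps diff_divide_distrib)
      have fa: "real_of_int a > P + R - 2" "real_of_int a < P + R"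
        unfolding a_def using dX floor_correct[of X1] floor_correct[of X2] by (simp_all, linarith+)
      have fb: "real_of_int b > db * T^2 - 2" "real_of_int b < db * T^2"
        unfolding b_def using dN floor_correct[of N1] floor_correct[of N2] by (simp_all, linarith+)
      have PT: "P \<ge> 2 * Q + 4 * T"
      proof -
        have "(2 * K * x + 4) / (dd * db) \<le> T" using TT0 unfolding T0_def by simp
        then have "2 * K * x + 4 \<le> T * (dd * db)" using dd2 db0 by (simp add: pos_divide_le_eq)
        then have "(2 * K * x + 4) * T \<le> (T * (dd * db)) * T" using T0' by (intro mult_right_mono) auto
        then show ?thesis unfolding P_def Q_def by (simp add: power2_eq_square algebra_simps)
      qed
      have goal: "K * T * (dd / (dd - 1)) powi (- (a + 1) + int d * (b + 1)) * (dd ^ d / (dd - 1) ^ (d - 1)) powi (- (b + 1))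
          * int_binom a b \<le> C1 * exp (- x)"
      proof (cases "0 \<le> b \<and> b \<le> a")
        case False
        then have "int_binom a b = 0" unfolding int_binom_def by auto
        then show ?thesis using C10 by simp
      next
        case True
        define A where "A = nat a"
        define B where "B = nat b"
        have aA: "a = int A" and bB: "b = int B" unfolding A_def B_def using True by auto
        have BA: "B \<le> A" using True aA bB by simp
        have ib: "int_binom (int A) (int B) = real (A choose B)" unfolding int_binom_def using BA by simp
        have "K * T * (dd / (dd - 1)) powi (- (a + 1) + int d * (b + 1)) * (dd ^ d / (dd - 1) ^ (d - 1)) powi (- (b + 1))
          * int_binom a b = K * T * ((dd / (dd - 1)) powi (- (int A + 1) + int d * (int B + 1)) * (dd ^ d / (dd - 1) ^ (d - 1)) powi (- (int B + 1))
          * real (A choose B))" unfolding aA bB ib by (simp add: mult_ac)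
        also have "\<dots> = K * T * (bpmf (1 / dd) A B / dd)" unfolding dd_def using powi_ident[OF assms(3) BA] by simp
        also have "\<dots> = mu * (T * bpmf (1 / dd) A B)" unfolding mu_def by simp
        finally have L: "K * T * (dd / (dd - 1)) powi (- (a + 1) + int d * (b + 1)) * (dd ^ d / (dd - 1) ^ (d - 1)) powi (- (b + 1))
          * int_binom a b = mu * (T * bpmf (1 / dd) A B)" .
        have cP: "c1 * T^2 = P / 2" "c2 * T^2 = 2 * P" unfolding c1_def c2_def P_def by simp_all
        have RQ2: "- Q \<le> R" "R \<le> Q" using RQ by linarith+
        have Aa: "real A = real_of_int a" using aA by simp
        have Aup: "real A \<le> c2 * T^2" unfolding cP Aa using fa PT RQ2 T1 by linarith
        have Alo: "real A \<ge> c1 * T^2" unfolding cP Aa using fa PT RQ2 T1 by linarith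
        have Adiv: "real A * (1 / dd) > (P + R - 2) / dd" "real A * (1 / dd) < (P + R) / dd"
          using fa aA dd2 by (simp_all add: divide_strict_right_mono)
        have Pd: "P / dd = db * T^2" unfolding P_def using dd2 by simp
        have Rd: "R / dd = mu * (s2 - s1) * T" unfolding R_def mu_def by simp
        have PRd: "(P + R) / dd = db * T^2 + mu * (s2 - s1) * T" "(P + R - 2) / dd = db * T^2 + mu * (s2 - s1) * T - 2 / dd"
          using Pd Rd by (simp_all add: add_divide_distrib diff_divide_distrib)
        have d2: "2 / dd \<le> 1" using dd2 by simp
        have Bb: "real B = real_of_int b" using bB by simp
        have TT2: "T \<ge> (Ds/2 + 4) / (c1 / dd)" using TT0 unfolding T0_def by simp
        have TT3: "Ds > 0 \<Longrightarrow> T \<ge> 6 / Ds" using TT0 unfolding T0_def by auto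
        have q1: "0 < 1 / dd" "1 / dd < 1" using dd2 by auto
        have key: "T * bpmf (1 / dd) A B \<le> exp (1/2) * exp (- (Ds^2 / (16 * c2))) * (B0 + B1 * Ds)"
        proof (cases "s2 - s1 \<ge> 0")
          case True
          have DsT: "Ds * T = mu * (s2 - s1) * T" unfolding Ds_def x_def using True by simp
          have "T * bpmf (1 / dd) A B \<le> exp (1/2) * exp (- (Ds^2 / (16 * c2))) * (2 + (2 * Ds + 16) / (c1 * (1 / dd) * (1 - 1 / dd)))"
          proof (rule fl[OF q1 c10 c20 Ds0 T1 _ TT3 BA Alo Aup])
            show "(Ds / 2 + 4) / (c1 * (1 / dd)) \<le> T" using TT2 by simp
            show "\<bar>real A * (1 / dd) - real B - Ds * T\<bar> \<le> 3"
              unfolding abs_le_iff by (intro conjI) (use Adiv PRd fb Bb DsT d2 in linarith)+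
          qed
          also have "c1 * (1 / dd) * (1 - 1 / dd) = c1 * Qv" unfolding Qv_def by simp
          finally show ?thesis using FLc by simp
        next
          case False
          have DsT: "Ds * T = - (mu * (s2 - s1) * T)" unfolding Ds_def x_def using False by (simp add: algebra_simps)
          have sym: "bpmf (1 / dd) A B = bpmf (1 - 1 / dd) A (A - B)" by (rule bpmf_sym[OF BA])
          have q2: "0 < 1 - 1 / dd" "1 - 1 / dd < 1" using dd2 by auto
          have "T * bpmf (1 - 1 / dd) A (A - B) \<le> exp (1/2) * exp (- (Ds^2 / (16 * c2))) * (2 + (2 * Ds + 16) / (c1 * (1 - 1 / dd) * (1 - (1 - 1 / dd))))"
          proof (rule fl[OF q2 c10 c20 Ds0 T1 _ TT3 _ Alo Aup])
            have "c1 / dd \<le> c1 * (1 - 1 / dd)"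
            proof -
              have "1 / dd \<le> 1 - 1 / dd" using dd2 by (simp add: field_simps)
              then have "c1 * (1 / dd) \<le> c1 * (1 - 1 / dd)" using c10 by (intro mult_left_mono) auto
              then show ?thesis by simp
            qed
            then have "(Ds / 2 + 4) / (c1 * (1 - 1 / dd)) \<le> (Ds / 2 + 4) / (c1 / dd)"
              using Ds0 c10 dd2 by (intro divide_left_mono) auto
            then show "(Ds / 2 + 4) / (c1 * (1 - 1 / dd)) \<le> T" using TT2 by linarith
            show "A - B \<le> A" by simp
            have e1: "real (A - B) = real A - real B" using BA by simp
            have e2: "real A * (1 - 1 / dd) = real A - real A * (1 / dd)" by (simp add: algebra_simps)
            show "\<bar>real A * (1 - 1 / dd) - real (A - B) - Ds * T\<bar> \<le> 3"
              unfolding abs_le_iff e1 e2 by (intro conjI) (use Adiv PRd fb Bb DsT d2 in linarith)+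
          qed
          also have "c1 * (1 - 1 / dd) * (1 - (1 - 1 / dd)) = c1 * Qv" unfolding Qv_def by simp
          finally show ?thesis using FLc sym by simp
        qed
        have "mu * (T * bpmf (1 / dd) A B) \<le> mu * (exp (1/2) * exp (- ((mu * x)^2 / (16 * c2))) * (B0 + B1 * (mu * x)))"
          using key mu0 unfolding Ds_def by (intro mult_left_mono) auto
        also have "\<dots> \<le> C1 * exp (- x)" unfolding C1_def by (rule final_bound[OF mu0 c20 B00 B10 x0])
        finally show ?thesis unfolding L .
      qed
      show ?case unfolding Let_def x1e x2e n1e n2e ex1 ex2 a_def[symmetric] b_def[symmetric]
        using goal unfolding K_def dd_def T_def x_def by simp
    qed
  qed
qed

end
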